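(* Let $\kappa=(\kappa_1,\dots,\kappa_n)\in\Gamma_k$ with $\kappa_1\geq\kappa_2\geq\dots\geq\kappa_n$, and let $A>0$ with $\kappa_n>-A$. Let $C_0=C(\sigma_k,n,A)$ be a constant such that $\kappa_k<C_0$ (a constant depending only on $n$, $k$, $A$ and an upper bound for $\sigma_k(\kappa)$, valid for all such $\kappa$). Let $N>\max\{1,C_0\}$. If $\kappa_1\geq N^{2^{k-1}}$, then there exists $1\leq l\leq k-1$ such that $\kappa_l\geq M^2$ and $\kappa_{l+1}\leq M$, where $M=N^{2^{k-l-1}}$.
   Context: $\sigma_m(\kappa)$ is the $m$-th elementary symmetric polynomial on $\mathbb{R}^n$, and $\Gamma_k=\{\kappa\in\mathbb{R}^n:\sigma_j(\kappa)>0\text{ for all }1\leq j\leq k\}$ is the Gårding cone. *)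

theory Defs
  imports Complex_Main
begin

text \<open>Vectors in R^n are functions nat => real, with components at indices 1..n.\<close>

definition esym :: "nat \<Rightarrow> nat \<Rightarrow> (nat \<Rightarrow> real) \<Rightarrow> real" where
  "esym n m \<kappa> = (\<Sum>S\<in>{S. S \<subseteq> {1..n} \<and> card S = m}. \<Prod>i\<in>S. \<kappa> i)"

definition garding_cone :: "nat \<Rightarrow> nat \<Rightarrow> (nat \<Rightarrow> real) set" where
  "garding_cone n k = {\<kappa>. \<forall>j\<in>{1..k}. esym n j \<kappa> > 0}"

definition admissible :: "nat \<Rightarrow> nat \<Rightarrow> real \<Rightarrow> real \<Rightarrow> (nat \<Rightarrow> real) \<Rightarrow> bool" where
  "admissible n k A S \<kappa> \<longleftrightarrow> \<kappa> \<in> garding_cone n k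
     \<and> (\<forall>i j. 1 \<le> i \<and> i \<le> j \<and> j \<le> n \<longrightarrow> \<kappa> j \<le> \<kappa> i)
     \<and> \<kappa> n > - A \<and> esym n k \<kappa> \<le> S"

end

theory Submission
  imports Defs
begin

theorem proposition2p15:
  fixes n k :: nat and A S C0 N :: real and \<kappa> :: "nat \<Rightarrow> real"
  assumes "1 \<le> k" "k \<le> n" "A > 0"
    and C0: "\<forall>\<kappa>'. admissible n k A S \<kappa>' \<longrightarrow> \<kappa>' k < C0"
    and adm: "admissible n k A S \<kappa>"
    and N: "N > max 1 C0"
    and big: "\<kappa> 1 \<ge> N ^ (2 ^ (k - 1))"
  shows "\<exists>l. 1 \<le> l \<and> l \<le> k - 1 \<and>
           \<kappa> l \<ge> (N ^ (2 ^ (k - l - 1)))\<^sup>2 \<and> \<kappa> (l + 1) \<le> N ^ (2 ^ (k - l - 1))"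
proof (rule ccontr)
  assume neg: "\<not> ?thesis"
  have kk: "\<kappa> k < N" using C0 adm N by force
  have step: "\<kappa> (Suc j) \<ge> N ^ (2 ^ (k - Suc j))"
    if j: "1 \<le> j" "Suc j \<le> k" and ih: "\<kappa> j \<ge> N ^ (2 ^ (k - j))" for j
  proof -
    have e: "(N ^ (2 ^ (k - j - 1)))\<^sup>2 = N ^ (2 ^ (k - j))"
    proof -
      have "k - j = Suc (k - j - 1)" using j by simp
      then have "(2::nat) ^ (k - j) = 2 ^ (k - j - 1) * 2" by (metis power_Suc2)
      then show ?thesis by (simp add: power_mult)
    qed
    have "\<not> \<kappa> (j + 1) \<le> N ^ (2 ^ (k - j - 1))"
    proof
      assume h: "\<kappa> (j + 1) \<le> N ^ (2 ^ (k - j - 1))"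
      have "1 \<le> j \<and> j \<le> k - 1 \<and> \<kappa> j \<ge> (N ^ (2 ^ (k - j - 1)))\<^sup>2 \<and> \<kappa> (j + 1) \<le> N ^ (2 ^ (k - j - 1))"
        using j ih h e by linarith
      then show False using neg by blast
    qed
    moreover have "k - Suc j = k - j - 1" by simp
    ultimately show ?thesis by (metis Suc_eq_plus1 linorder_not_le less_imp_le)
  qed
  have all: "\<kappa> j \<ge> N ^ (2 ^ (k - j))" if "1 \<le> j" "j \<le> k" for j
    using that
  proof (induction j)
    case 0 then show ?case by simp
  next
    case (Suc j)
    show ?case
    proof (cases "j = 0")
      case True then show ?thesis using big by simp
    next
      case False then show ?thesis using Suc step by simp
    qed
  qed
  have "\<kappa> k \<ge> N" using all[of k] assms(1) by simp
  then show False using kk by simp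
qed

end
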